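(* Let $\Omega=\{1,\dots,n\}$ and $f:2^{\Omega}\to\mathbb{R}$. Define $f_1,f_2:2^{\Omega}\to\mathbb{R}$ by $f_1(\mathcal{S})=f(\mathcal{S}^c)$ and $f_2(\mathcal{S})=f(\mathcal{S})+f(\mathcal{S}^c)-f(\Omega)$, where $\mathcal{S}^c=\Omega\setminus\mathcal{S}$. For $\mathcal{A}\subseteq\Omega$ define $f_{\mathcal{A}}:2^{\Omega\setminus\mathcal{A}}\to\mathbb{R}$ by $f_{\mathcal{A}}(\mathcal{S})=f(\mathcal{A}\cup\mathcal{S})$. For a positive integer $q$ dividing $n$, let $\Omega(q)=\{1,\dots,n/q\}$, $\mathcal{S}(i)=\{(i-1)q+1,\dots,iq\}$ for $i\in\Omega(q)$, and $f_q:2^{\Omega(q)}\to\mathbb{R}$, $f_q(\mathcal{S})=f(\bigcup_{i\in\mathcal{S}}\mathcal{S}(i))$. Let $g:2^{\Omega}\to\mathbb{R}$ be modular and define $f\circledast g(\mathcal{S})=\min_{\mathcal{Z}\subseteq\mathcal{S}} f(\mathcal{Z})+g(\mathcal{S}\setminus\mathcal{Z})$. Then (i) $\mathcal{E}[f]=\mathcal{E}[f_1]$; (ii) $2\mathcal{E}[f]\ge\mathcal{E}[f_2]$; (iii) $\mathcal{E}[f]\ge\mathcal{E}[f_{\mathcal{A}}]$; (iv) $\mathcal{E}[f]\ge\mathcal{E}[f_q]$; (v) $\mathcal{E}[f]\ge\mathcal{E}[f\circledast g]$.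
   Context: For a set function $h$ on a finite ground set $V$, $\mathcal{E}[h]=\max_{\mathcal{A},\mathcal{B}\subseteq V} h(\mathcal{A}\cup\mathcal{B})+h(\mathcal{A}\cap\mathcal{B})-h(\mathcal{A})-h(\mathcal{B})$ (the maximum is taken over subsets of the ground set of $h$). A set function $g$ is modular if both $g$ and $-g$ are submodular. *)

theory Defs
  imports "HOL-Analysis.Analysis"
begin

(* Set functions on a finite ground set V are modelled as functions nat set \<Rightarrow> real;
   only their values on subsets of V matter. *)

definition Eg :: "nat set \<Rightarrow> (nat set \<Rightarrow> real) \<Rightarrow> real" where
  "Eg V h = Max {h (A \<union> B) + h (A \<inter> B) - h A - h B | A B. A \<subseteq> V \<and> B \<subseteq> V}"

definition submodular_on :: "nat set \<Rightarrow> (nat set \<Rightarrow> real) \<Rightarrow> bool" where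
  "submodular_on V h \<longleftrightarrow>
     (\<forall>A B. A \<subseteq> V \<longrightarrow> B \<subseteq> V \<longrightarrow> h (A \<union> B) + h (A \<inter> B) \<le> h A + h B)"

definition modular_on :: "nat set \<Rightarrow> (nat set \<Rightarrow> real) \<Rightarrow> bool" where
  "modular_on V g \<longleftrightarrow> submodular_on V g \<and> submodular_on V (\<lambda>S. - g S)"

definition conv_min :: "(nat set \<Rightarrow> real) \<Rightarrow> (nat set \<Rightarrow> real) \<Rightarrow> nat set \<Rightarrow> real" where
  "conv_min f g S = Min {f Z + g (S - Z) | Z. Z \<subseteq> S}"

definition block :: "nat \<Rightarrow> nat \<Rightarrow> nat set" where
  "block q i = {(i - 1) * q + 1 .. i * q}"

end

theory Submission
  imports Defs
begin

lemma Eg_ge: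
  assumes "finite V" "A \<subseteq> V" "B \<subseteq> V"
  shows "h (A \<union> B) + h (A \<inter> B) - h A - h B \<le> Eg V h"
proof -
  have eq: "{h (A \<union> B) + h (A \<inter> B) - h A - h B | A B. A \<subseteq> V \<and> B \<subseteq> V}
     = (\<lambda>(A,B). h (A \<union> B) + h (A \<inter> B) - h A - h B) ` (Pow V \<times> Pow V)" by auto
  have "finite (Pow V \<times> Pow V)" using assms by simp
  then have "finite ((\<lambda>(A,B). h (A \<union> B) + h (A \<inter> B) - h A - h B) ` (Pow V \<times> Pow V))" by simp
  moreover have "h (A \<union> B) + h (A \<inter> B) - h A - h B \<in> (\<lambda>(A,B). h (A \<union> B) + h (A \<inter> B) - h A - h B) ` (Pow V \<times> Pow V)"
    using assms by (intro image_eqI[of _ _ "(A,B)"]) auto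
  ultimately show ?thesis unfolding Eg_def eq by (rule Max_ge)
qed

lemma Eg_le:
  assumes "finite V" "\<And>A B. A \<subseteq> V \<Longrightarrow> B \<subseteq> V \<Longrightarrow> h (A \<union> B) + h (A \<inter> B) - h A - h B \<le> c"
  shows "Eg V h \<le> c"
proof -
  have eq: "{h (A \<union> B) + h (A \<inter> B) - h A - h B | A B. A \<subseteq> V \<and> B \<subseteq> V}
     = (\<lambda>(A,B). h (A \<union> B) + h (A \<inter> B) - h A - h B) ` (Pow V \<times> Pow V)" by auto
  have "finite (Pow V \<times> Pow V)" using assms by simp
  moreover have "(Pow V \<times> Pow V) \<noteq> {}" by auto
  ultimately show ?thesis unfolding Eg_def eq
    by (subst Max_le_iff) (use assms in auto)
qed

lemma block_disj:
  assumes "0 < q" "1 \<le> i" "1 \<le> j" "i \<noteq> j"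
  shows "block q i \<inter> block q j = {}"
proof -
  have *: "block q i \<inter> block q j = {}" if "i < j" "1 \<le> i" for i j
  proof -
    have "i * q \<le> (j - 1) * q" using that by (intro mult_le_mono1) simp
    show ?thesis
    proof (rule ccontr)
      assume "block q i \<inter> block q j \<noteq> {}"
      then obtain x where "x \<in> block q i" "x \<in> block q j" by auto
      then have "x \<le> i * q" "(j - 1) * q + 1 \<le> x" unfolding block_def by auto
      then show False using \<open>i * q \<le> (j - 1) * q\<close> by linarith
    qed
  qed
  show ?thesis using assms *[of i j] *[of j i] by (cases "i < j") auto
qed

lemma block_sub:
  assumes "i \<in> {1..n div q}" "0 < q" "q dvd n"
  shows "block q i \<subseteq> {1..n}"
proof -
  have "i * q \<le> (n div q) * q" using assms by (intro mult_le_mono1) simp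
  also have "\<dots> = n" using assms by simp
  finally show ?thesis using assms unfolding block_def by auto
qed

theorem mainTheorem3:
  fixes n :: nat and f :: "nat set \<Rightarrow> real"
  defines "\<Omega> \<equiv> {1..n}"
  shows "Eg \<Omega> f = Eg \<Omega> (\<lambda>S. f (\<Omega> - S))
    \<and> 2 * Eg \<Omega> f \<ge> Eg \<Omega> (\<lambda>S. f S + f (\<Omega> - S) - f \<Omega>)
    \<and> (\<forall>A. A \<subseteq> \<Omega> \<longrightarrow> Eg \<Omega> f \<ge> Eg (\<Omega> - A) (\<lambda>S. f (A \<union> S)))
    \<and> (\<forall>q::nat. 0 < q \<longrightarrow> q dvd n \<longrightarrow>
         Eg \<Omega> f \<ge> Eg {1..n div q} (\<lambda>S. f (\<Union>i\<in>S. block q i)))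
    \<and> (\<forall>g. modular_on \<Omega> g \<longrightarrow> Eg \<Omega> f \<ge> Eg \<Omega> (conv_min f g))"
proof -
  have fin: "finite \<Omega>" unfolding \<Omega>_def by simp
  let ?f1 = "\<lambda>S. f (\<Omega> - S)"
  have i1: "Eg \<Omega> ?f1 \<le> Eg \<Omega> f"
  proof (rule Eg_le[OF fin])
    fix A B assume AB: "A \<subseteq> \<Omega>" "B \<subseteq> \<Omega>"
    have "?f1 (A \<union> B) + ?f1 (A \<inter> B) - ?f1 A - ?f1 B
      = f ((\<Omega> - A) \<union> (\<Omega> - B)) + f ((\<Omega> - A) \<inter> (\<Omega> - B)) - f (\<Omega> - A) - f (\<Omega> - B)"
      by (simp add: Diff_Un Diff_Int add.commute)
    also have "\<dots> \<le> Eg \<Omega> f" by (rule Eg_ge[OF fin]) auto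
    finally show "?f1 (A \<union> B) + ?f1 (A \<inter> B) - ?f1 A - ?f1 B \<le> Eg \<Omega> f" .
  qed
  have i2: "Eg \<Omega> f \<le> Eg \<Omega> ?f1"
  proof (rule Eg_le[OF fin])
    fix A B assume AB: "A \<subseteq> \<Omega>" "B \<subseteq> \<Omega>"
    have "f (A \<union> B) + f (A \<inter> B) - f A - f B
      = ?f1 ((\<Omega> - A) \<union> (\<Omega> - B)) + ?f1 ((\<Omega> - A) \<inter> (\<Omega> - B)) - ?f1 (\<Omega> - A) - ?f1 (\<Omega> - B)"
    proof -
      have "\<Omega> - ((\<Omega> - A) \<union> (\<Omega> - B)) = A \<inter> B" "\<Omega> - ((\<Omega> - A) \<inter> (\<Omega> - B)) = A \<union> B"
        "\<Omega> - (\<Omega> - A) = A" "\<Omega> - (\<Omega> - B) = B" using AB by auto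
      then show ?thesis by simp
    qed
    also have "\<dots> \<le> Eg \<Omega> ?f1" by (rule Eg_ge[OF fin]) auto
    finally show "f (A \<union> B) + f (A \<inter> B) - f A - f B \<le> Eg \<Omega> ?f1" .
  qed
  have ii: "2 * Eg \<Omega> f \<ge> Eg \<Omega> (\<lambda>S. f S + f (\<Omega> - S) - f \<Omega>)"
  proof (rule Eg_le[OF fin])
    fix A B assume AB: "A \<subseteq> \<Omega>" "B \<subseteq> \<Omega>"
    have a: "f (A \<union> B) + f (A \<inter> B) - f A - f B \<le> Eg \<Omega> f" by (rule Eg_ge[OF fin AB])
    have b: "?f1 (A \<union> B) + ?f1 (A \<inter> B) - ?f1 A - ?f1 B \<le> Eg \<Omega> ?f1" by (rule Eg_ge[OF fin AB])
    show "(f (A \<union> B) + f (\<Omega> - (A \<union> B)) - f \<Omega>) + (f (A \<inter> B) + f (\<Omega> - (A \<inter> B)) - f \<Omega>)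
        - (f A + f (\<Omega> - A) - f \<Omega>) - (f B + f (\<Omega> - B) - f \<Omega>) \<le> 2 * Eg \<Omega> f"
      using a b i1 i2 by linarith
  qed
  have iii: "\<forall>A. A \<subseteq> \<Omega> \<longrightarrow> Eg \<Omega> f \<ge> Eg (\<Omega> - A) (\<lambda>S. f (A \<union> S))"
  proof (intro allI impI)
    fix A assume A: "A \<subseteq> \<Omega>"
    show "Eg \<Omega> f \<ge> Eg (\<Omega> - A) (\<lambda>S. f (A \<union> S))"
    proof (rule Eg_le)
      show "finite (\<Omega> - A)" using fin by simp
      fix S T assume ST: "S \<subseteq> \<Omega> - A" "T \<subseteq> \<Omega> - A"
      have "f ((A \<union> S) \<union> (A \<union> T)) + f ((A \<union> S) \<inter> (A \<union> T)) - f (A \<union> S) - f (A \<union> T) \<le> Eg \<Omega> f"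
        by (rule Eg_ge[OF fin]) (use A ST in auto)
      moreover have "(A \<union> S) \<union> (A \<union> T) = A \<union> (S \<union> T)" "(A \<union> S) \<inter> (A \<union> T) = A \<union> (S \<inter> T)" by auto
      ultimately show "f (A \<union> (S \<union> T)) + f (A \<union> (S \<inter> T)) - f (A \<union> S) - f (A \<union> T) \<le> Eg \<Omega> f" by simp
    qed
  qed
  have iv: "\<forall>q::nat. 0 < q \<longrightarrow> q dvd n \<longrightarrow>
         Eg \<Omega> f \<ge> Eg {1..n div q} (\<lambda>S. f (\<Union>i\<in>S. block q i))"
  proof (intro allI impI)
    fix q :: nat assume q: "0 < q" "q dvd n"
    let ?U = "\<lambda>S. \<Union>i\<in>S. block q i"
    show "Eg \<Omega> f \<ge> Eg {1..n div q} (\<lambda>S. f (?U S))"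
    proof (rule Eg_le)
      fix S T assume ST: "S \<subseteq> {1..n div q}" "T \<subseteq> {1..n div q}"
      have sub: "?U X \<subseteq> \<Omega>" if "X \<subseteq> {1..n div q}" for X
        using block_sub[OF _ q] that unfolding \<Omega>_def by blast
      have "f (?U S \<union> ?U T) + f (?U S \<inter> ?U T) - f (?U S) - f (?U T) \<le> Eg \<Omega> f"
        by (rule Eg_ge[OF fin sub sub]) (use ST in auto)
      moreover have "?U (S \<union> T) = ?U S \<union> ?U T" by auto
      moreover have "?U (S \<inter> T) = ?U S \<inter> ?U T"
      proof
        show "?U (S \<inter> T) \<subseteq> ?U S \<inter> ?U T" by auto
        show "?U S \<inter> ?U T \<subseteq> ?U (S \<inter> T)"
        proof
          fix x assume "x \<in> ?U S \<inter> ?U T"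
          then obtain i j where ij: "i \<in> S" "j \<in> T" "x \<in> block q i" "x \<in> block q j" by auto
          have "i = j"
          proof (rule ccontr)
            assume ne: "i \<noteq> j"
            have "i \<in> {1..n div q}" using ST(1) ij(1) by blast
            then have i1: "1 \<le> i" by simp
            have "j \<in> {1..n div q}" using ST(2) ij(2) by blast
            then have j1: "1 \<le> j" by simp
            have "block q i \<inter> block q j = {}" by (rule block_disj[OF q(1) i1 j1 ne])
            then show False using ij(3,4) by blast
          qed
          then show "x \<in> ?U (S \<inter> T)" using ij by auto
        qed
      qed
      ultimately show "f (?U (S \<union> T)) + f (?U (S \<inter> T)) - f (?U S) - f (?U T) \<le> Eg \<Omega> f" by simp
    qed simp
  qed
  have v: "\<forall>g. modular_on \<Omega> g \<longrightarrow> Eg \<Omega> f \<ge> Eg \<Omega> (conv_min f g)"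
  proof (intro allI impI)
    fix g assume g: "modular_on \<Omega> g"
    have mod: "g (A \<union> B) + g (A \<inter> B) = g A + g B" if "A \<subseteq> \<Omega>" "B \<subseteq> \<Omega>" for A B
    proof -
      have "g (A \<union> B) + g (A \<inter> B) \<le> g A + g B" using g that unfolding modular_on_def submodular_on_def by blast
      moreover have "- g (A \<union> B) + - g (A \<inter> B) \<le> - g A + - g B" using g that unfolding modular_on_def submodular_on_def by blast
      ultimately show ?thesis by linarith
    qed
    have gd: "g (S - Z) = g S - g Z + g {}" if "Z \<subseteq> S" "S \<subseteq> \<Omega>" for S Z
    proof -
      have "g (Z \<union> (S - Z)) + g (Z \<inter> (S - Z)) = g Z + g (S - Z)" using that by (intro mod) auto
      moreover have "Z \<union> (S - Z) = S" "Z \<inter> (S - Z) = {}" using that by auto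
      ultimately show ?thesis by simp
    qed
    have cm: "\<exists>Z. Z \<subseteq> S \<and> conv_min f g S = f Z + g (S - Z)" if "S \<subseteq> \<Omega>" for S
    proof -
      have eq: "{f Z + g (S - Z) | Z. Z \<subseteq> S} = (\<lambda>Z. f Z + g (S - Z)) ` Pow S" by auto
      have "finite S" using that fin finite_subset by blast
      then have "conv_min f g S \<in> (\<lambda>Z. f Z + g (S - Z)) ` Pow S"
        unfolding conv_min_def eq by (intro Min_in) auto
      then show ?thesis by auto
    qed
    have cle: "conv_min f g S \<le> f Z + g (S - Z)" if "Z \<subseteq> S" "S \<subseteq> \<Omega>" for S Z
    proof -
      have eq: "{f Z + g (S - Z) | Z. Z \<subseteq> S} = (\<lambda>Z. f Z + g (S - Z)) ` Pow S" by auto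
      have "finite S" using that fin finite_subset by blast
      then show ?thesis unfolding conv_min_def eq by (intro Min_le) (use that in auto)
    qed
    show "Eg \<Omega> f \<ge> Eg \<Omega> (conv_min f g)"
    proof (rule Eg_le[OF fin])
      fix A B assume AB: "A \<subseteq> \<Omega>" "B \<subseteq> \<Omega>"
      obtain ZA where ZA: "ZA \<subseteq> A" "conv_min f g A = f ZA + g (A - ZA)" using cm[OF AB(1)] by blast
      obtain ZB where ZB: "ZB \<subseteq> B" "conv_min f g B = f ZB + g (B - ZB)" using cm[OF AB(2)] by blast
      have c1: "conv_min f g (A \<union> B) \<le> f (ZA \<union> ZB) + g ((A \<union> B) - (ZA \<union> ZB))"
        by (rule cle) (use ZA ZB AB in auto)
      have c2: "conv_min f g (A \<inter> B) \<le> f (ZA \<inter> ZB) + g ((A \<inter> B) - (ZA \<inter> ZB))"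
        by (rule cle) (use ZA ZB AB in auto)
      have e: "f (ZA \<union> ZB) + f (ZA \<inter> ZB) - f ZA - f ZB \<le> Eg \<Omega> f"
        by (rule Eg_ge[OF fin]) (use ZA ZB AB in auto)
      have g1: "g ((A \<union> B) - (ZA \<union> ZB)) = g (A \<union> B) - g (ZA \<union> ZB) + g {}"
        by (rule gd) (use ZA ZB AB in auto)
      have g2: "g ((A \<inter> B) - (ZA \<inter> ZB)) = g (A \<inter> B) - g (ZA \<inter> ZB) + g {}"
        by (rule gd) (use ZA ZB AB in auto)
      have g3: "g (A - ZA) = g A - g ZA + g {}" by (rule gd) (use ZA AB in auto)
      have g4: "g (B - ZB) = g B - g ZB + g {}" by (rule gd) (use ZB AB in auto)
      have m1: "g (A \<union> B) + g (A \<inter> B) = g A + g B" by (rule mod[OF AB])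
      have m2: "g (ZA \<union> ZB) + g (ZA \<inter> ZB) = g ZA + g ZB" by (rule mod) (use ZA ZB AB in auto)
      show "conv_min f g (A \<union> B) + conv_min f g (A \<inter> B) - conv_min f g A - conv_min f g B \<le> Eg \<Omega> f"
        using c1 c2 e g1 g2 g3 g4 m1 m2 ZA(2) ZB(2) by linarith
    qed
  qed
  have "Eg \<Omega> f = Eg \<Omega> ?f1" using i1 i2 by linarith
  then show ?thesis using ii iii iv v by blast
qed

end
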